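(* Let $k\ge 1$ be an integer and let $G=K_{n_1,n_2,\dots,n_p}$ ($p\ge 2$) be a complete $p$-partite graph such that $|\{i : n_i\ge k\}|\ge 2$. Then $\Gamma_{\times k,t}(G)=2k$.
   Context: A set $S\subseteq V(G)$ is a $k$-tuple total dominating set ($k$TDS) of a graph $G$ with $\delta(G)\ge k$ if $|N_G(x)\cap S|\ge k$ for every $x\in V(G)$. The upper $k$-tuple total domination number $\Gamma_{\times k,t}(G)$ is the maximum cardinality of a minimal (with respect to inclusion) $k$TDS of $G$. $K_{n_1,\dots,n_p}$ denotes the complete $p$-partite graph with parts of sizes $n_1,\dots,n_p$. *)

theory Defs
  imports Main
begin

text \<open>A (simple) graph is given by a vertex set V and a symmetric irreflexive
adjacency relation E. Open neighbourhood of x:\<close>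
definition nbhd :: "'a set \<Rightarrow> ('a \<Rightarrow> 'a \<Rightarrow> bool) \<Rightarrow> 'a \<Rightarrow> 'a set" where
  "nbhd V E x = {y \<in> V. E x y}"

definition min_degree :: "'a set \<Rightarrow> ('a \<Rightarrow> 'a \<Rightarrow> bool) \<Rightarrow> nat" where
  "min_degree V E = Min ((\<lambda>x. card (nbhd V E x)) ` V)"

definition is_kTDS :: "'a set \<Rightarrow> ('a \<Rightarrow> 'a \<Rightarrow> bool) \<Rightarrow> nat \<Rightarrow> 'a set \<Rightarrow> bool" where
  "is_kTDS V E k S \<longleftrightarrow> S \<subseteq> V \<and> (\<forall>x\<in>V. card (nbhd V E x \<inter> S) \<ge> k)"

definition is_minimal_kTDS :: "'a set \<Rightarrow> ('a \<Rightarrow> 'a \<Rightarrow> bool) \<Rightarrow> nat \<Rightarrow> 'a set \<Rightarrow> bool" where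
  "is_minimal_kTDS V E k S \<longleftrightarrow> is_kTDS V E k S \<and> (\<forall>T. T \<subset> S \<longrightarrow> \<not> is_kTDS V E k T)"

text \<open>Upper k-tuple total domination number (for finite graphs with min degree \<ge> k).\<close>
definition upper_ktuple_tdom :: "'a set \<Rightarrow> ('a \<Rightarrow> 'a \<Rightarrow> bool) \<Rightarrow> nat \<Rightarrow> nat" where
  "upper_ktuple_tdom V E k = Max (card ` {S. is_minimal_kTDS V E k S})"

text \<open>Complete p-partite graph K_{n 0, ..., n (p-1)}: vertex (i,j) is the j-th vertex
of part i; two vertices are adjacent iff they lie in different parts.\<close>
definition cmp_vertices :: "nat \<Rightarrow> (nat \<Rightarrow> nat) \<Rightarrow> (nat \<times> nat) set" where
  "cmp_vertices p n = {(i, j). i < p \<and> j < n i}"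

definition cmp_adj :: "nat \<times> nat \<Rightarrow> nat \<times> nat \<Rightarrow> bool" where
  "cmp_adj u v \<longleftrightarrow> fst u \<noteq> fst v"

end

theory Submission
  imports Defs
begin

lemma nb_inter:
  assumes "S \<subseteq> V"
  shows "nbhd V cmp_adj x \<inter> S = {y\<in>S. fst y \<noteq> fst x}"
  using assms by (auto simp: nbhd_def cmp_adj_def)

lemma card_split:
  assumes "finite S"
  shows "card S = card {y\<in>S. fst y = i} + card {y\<in>S. fst y \<noteq> i}"
proof -
  have "S = {y\<in>S. fst y = i} \<union> {y\<in>S. fst y \<noteq> i}" by auto
  moreover have "finite {y\<in>S. fst y = i}" "finite {y\<in>S. fst y \<noteq> i}" using assms by auto
  ultimately show ?thesis using card_Un_disjoint
    by (metis (mono_tags, lifting) disjoint_iff mem_Collect_eq)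
qed

lemma tight:
  assumes fin: "finite V" and min: "is_minimal_kTDS V cmp_adj k S" and v: "v \<in> S"
  shows "\<exists>x\<in>V. fst x \<noteq> fst v \<and> card {y\<in>S. fst y \<noteq> fst x} = k"
proof -
  have SV: "S \<subseteq> V" and ge: "\<forall>x\<in>V. card {y\<in>S. fst y \<noteq> fst x} \<ge> k"
    using min nb_inter unfolding is_minimal_kTDS_def is_kTDS_def by auto
  have "S - {v} \<subset> S" using v by auto
  hence "\<not> is_kTDS V cmp_adj k (S - {v})" using min unfolding is_minimal_kTDS_def by auto
  moreover have "S - {v} \<subseteq> V" using SV by auto
  ultimately obtain x where x: "x \<in> V" and lt: "card {y\<in>S - {v}. fst y \<noteq> fst x} < k"
    using nb_inter[of "S - {v}" V] unfolding is_kTDS_def by fastforce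
  have finS: "finite S" using SV fin finite_subset by blast
  have geq: "card {y\<in>S. fst y \<noteq> fst x} \<ge> k" using ge x by auto
  show ?thesis
  proof (cases "fst v = fst x")
    case True
    hence "{y\<in>S - {v}. fst y \<noteq> fst x} = {y\<in>S. fst y \<noteq> fst x}" by auto
    thus ?thesis using lt geq by simp
  next
    case False
    hence eq: "{y\<in>S - {v}. fst y \<noteq> fst x} = {y\<in>S. fst y \<noteq> fst x} - {v}" by auto
    have "v \<in> {y\<in>S. fst y \<noteq> fst x}" using False v by auto
    hence "card {y\<in>S - {v}. fst y \<noteq> fst x} = card {y\<in>S. fst y \<noteq> fst x} - 1"
      unfolding eq using finS by (simp add: card_Diff_singleton)
    thus ?thesis using lt geq False x by (intro bexI[of _ x]) auto
  qed
qed

lemma upper: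
  assumes fin: "finite V" and min: "is_minimal_kTDS V cmp_adj k S"
  shows "card S \<le> 2 * k"
proof (cases "S = {}")
  case True then show ?thesis by simp
next
  case False
  then obtain v where v: "v \<in> S" by auto
  have finS: "finite S" using min fin finite_subset unfolding is_minimal_kTDS_def is_kTDS_def by blast
  obtain x where x: "x \<in> V" "fst x \<noteq> fst v" "card {y\<in>S. fst y \<noteq> fst x} = k"
    using tight[OF fin min v] by auto
  have c1: "card S = card {y\<in>S. fst y = fst x} + k" using card_split[OF finS, of "fst x"] x by simp
  show ?thesis
  proof (cases "{y\<in>S. fst y = fst x} = {}")
    case True then show ?thesis using c1 unfolding True by simp
  next
    case False
    then obtain w where w: "w \<in> S" "fst w = fst x" by auto
    obtain x' where x': "x' \<in> V" "fst x' \<noteq> fst w" "card {y\<in>S. fst y \<noteq> fst x'} = k"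
      using tight[OF fin min w(1)] by auto
    have c2: "card S = card {y\<in>S. fst y = fst x'} + k" using card_split[OF finS, of "fst x'"] x' by simp
    have sub: "{y\<in>S. fst y = fst x'} \<subseteq> {y\<in>S. fst y \<noteq> fst x}" using w x' by auto
    have "card {y\<in>S. fst y = fst x'} \<le> k" using card_mono[OF _ sub] finS x by simp
    thus ?thesis using c1 c2 by simp
  qed
qed

theorem mainTheorem4:
  fixes k p :: nat and n :: "nat \<Rightarrow> nat"
  assumes "k \<ge> 1" and "p \<ge> 2"
    and "\<forall>i<p. n i \<ge> 1"
    and "card {i. i < p \<and> n i \<ge> k} \<ge> 2"
  shows "upper_ktuple_tdom (cmp_vertices p n) cmp_adj k = 2 * k"
proof -
  define V where "V = cmp_vertices p n"
  have VS: "V = Sigma {..<p} (\<lambda>i. {..<n i})" unfolding V_def cmp_vertices_def by auto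
  have finV: "finite V" unfolding VS by auto
  define I where "I = {i. i < p \<and> n i \<ge> k}"
  have cI: "card I \<ge> 2" using assms(4) I_def by simp
  have finI: "finite I" using cI card.infinite by fastforce
  have "I \<noteq> {}" using cI by auto
  then obtain a where a: "a \<in> I" by auto
  have "\<not> I \<subseteq> {a}"
  proof
    assume "I \<subseteq> {a}"
    hence "card I \<le> card {a}" by (intro card_mono) auto
    thus False using cI by simp
  qed
  then obtain b where b: "b \<in> I" "b \<noteq> a" by auto
  have ap: "a < p" "n a \<ge> k" and bp: "b < p" "n b \<ge> k" using a b I_def by auto
  define Ba where "Ba = (\<lambda>j. (a, j)) ` {..<k}"
  define Bb where "Bb = (\<lambda>j. (b, j)) ` {..<k}"
  define S where "S = Ba \<union> Bb"
  have cBa: "card Ba = k" unfolding Ba_def by (simp add: card_image inj_on_def)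
  have cBb: "card Bb = k" unfolding Bb_def by (simp add: card_image inj_on_def)
  have disj: "Ba \<inter> Bb = {}" using b(2) unfolding Ba_def Bb_def by auto
  have cS: "card S = 2 * k" unfolding S_def
    using card_Un_disjoint[OF _ _ disj] cBa cBb unfolding Ba_def Bb_def by simp
  have SV: "S \<subseteq> V" unfolding S_def Ba_def Bb_def VS using ap bp by auto
  have finS: "finite S" using SV finV finite_subset by blast
  have kt: "is_kTDS V cmp_adj k S"
    unfolding is_kTDS_def
  proof (intro conjI ballI SV)
    fix x assume "x \<in> V"
    show "card (nbhd V cmp_adj x \<inter> S) \<ge> k"
    proof (cases "fst x = a")
      case True
      hence "Bb \<subseteq> {y\<in>S. fst y \<noteq> fst x}" using b(2) unfolding S_def Bb_def by auto
      hence "Bb \<subseteq> nbhd V cmp_adj x \<inter> S" using nb_inter[OF SV] by simp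
      thus ?thesis using card_mono[of "nbhd V cmp_adj x \<inter> S" Bb] finS cBb by auto
    next
      case False
      hence "Ba \<subseteq> {y\<in>S. fst y \<noteq> fst x}" unfolding S_def Ba_def by auto
      hence "Ba \<subseteq> nbhd V cmp_adj x \<inter> S" using nb_inter[OF SV] by simp
      thus ?thesis using card_mono[of "nbhd V cmp_adj x \<inter> S" Ba] finS cBa by auto
    qed
  qed
  have minS: "is_minimal_kTDS V cmp_adj k S"
    unfolding is_minimal_kTDS_def
  proof (intro conjI allI impI kt notI)
    fix T assume TS: "T \<subset> S" and kT: "is_kTDS V cmp_adj k T"
    then obtain v where v: "v \<in> S" "v \<notin> T" by auto
    have TV: "T \<subseteq> V" using TS SV by auto
    show False
    proof (cases "v \<in> Ba")
      case True
      have x: "(b, 0) \<in> V" unfolding VS using bp assms(1) by auto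
      have sub: "{y\<in>T. fst y \<noteq> b} \<subseteq> Ba - {v}" using TS v b(2) unfolding S_def Bb_def by auto
      have "card (Ba - {v}) < k" using True cBa assms(1) unfolding Ba_def by (simp add: card_Diff_singleton)
      moreover have "finite (Ba - {v})" unfolding Ba_def by simp
      ultimately have "card {y\<in>T. fst y \<noteq> b} < k" using card_mono[OF _ sub] by linarith
      moreover have "card (nbhd V cmp_adj (b,0) \<inter> T) \<ge> k" using kT x unfolding is_kTDS_def by blast
      ultimately show False unfolding nb_inter[OF TV] by simp
    next
      case False
      hence vb: "v \<in> Bb" using v S_def by auto
      have x: "(a, 0) \<in> V" unfolding VS using ap assms(1) by auto
      have sub: "{y\<in>T. fst y \<noteq> a} \<subseteq> Bb - {v}" using TS v b(2) unfolding S_def Ba_def by auto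
      have "card (Bb - {v}) < k" using vb cBb assms(1) unfolding Bb_def by (simp add: card_Diff_singleton)
      moreover have "finite (Bb - {v})" unfolding Bb_def by simp
      ultimately have "card {y\<in>T. fst y \<noteq> a} < k" using card_mono[OF _ sub] by linarith
      moreover have "card (nbhd V cmp_adj (a,0) \<inter> T) \<ge> k" using kT x unfolding is_kTDS_def by blast
      ultimately show False unfolding nb_inter[OF TV] by simp
    qed
  qed
  have finM: "finite {S. is_minimal_kTDS V cmp_adj k S}"
    by (rule finite_subset[of _ "Pow V"]) (auto simp: is_minimal_kTDS_def is_kTDS_def finV)
  show ?thesis unfolding V_def[symmetric] upper_ktuple_tdom_def
    apply (rule Max_eqI)
    using finM apply simp
    using upper[OF finV] apply blast
    using minS cS by (metis image_eqI mem_Collect_eq)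
qed

end
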